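(* Let $p,q,p',q'$ be primes. In the algebra $(\mathbb N,\cdot,\mathbb N)$, $$p:q::_m p':q'\iff (p=q\text{ and }p'=q')\ \text{or}\ (p=p'\text{ and }q=q').$$
   Context: $(\mathbb N,\cdot,\mathbb N)$ is the algebra with universe the natural numbers $\mathbb N$, multiplication, and every natural number as a constant. A justification is a pair of terms $s\to t$ with the variables of $t$ among those of $s$; monolinear justifications are those where $s,t$ contain only one fixed variable $x$, occurring at most once in $s$ and at most once in $t$. $\uparrow^m(a\to b)$ is the set of monolinear justifications $s\to t$ with $a=s(\mathbf o)$, $b=t(\mathbf o)$ for some value $\mathbf o$; $\uparrow^m(a\to b:\!\cdot\,c\to d):=\uparrow^m(a\to b)\cap\uparrow^m(c\to d)$. A monolinear justification is trivial if it lies in all sets $\uparrow^m(a'\to b':\!\cdot\,c'\to d')$. $a\to b:\!\cdot_m\,c\to d$ holds iff either (i) all justifications in $\uparrow^m(a\to b)\cup\uparrow^m(c\to d)$ are trivial, or (ii) $J_d:=\uparrow^m(a\to b:\!\cdot\,c\to d)$ contains a non-trivial justification and for every $d'$, $J_d\subseteq J_{d'}$ implies $J_{d'}$ contains a non-trivial justification and $J_{d'}\subseteq J_d$ (ignoring trivial justifications). $a:b::_m c:d$ iff $a\to b:\!\cdot_m\,c\to d$, $b\to a:\!\cdot_m\,d\to c$, $c\to d:\!\cdot_m\,a\to b$, $d\to c:\!\cdot_m\,b\to a$ all hold. *)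

theory Defs
  imports "HOL-Computational_Algebra.Primes"
begin

text \<open>Terms of the algebra (N, *, N) in the single fixed variable x:
  the variable, a constant for every natural number, and products.\<close>
datatype mterm = X | C nat | M mterm mterm

fun occ :: "mterm \<Rightarrow> nat" where
  "occ X = 1"
| "occ (C n) = 0"
| "occ (M s t) = occ s + occ t"

fun eval :: "mterm \<Rightarrow> nat \<Rightarrow> nat" where
  "eval X v = v"
| "eval (C n) v = n"
| "eval (M s t) v = eval s v * eval t v"

type_synonym just = "mterm \<times> mterm"

definition monolinear :: "just \<Rightarrow> bool" where
  "monolinear j \<longleftrightarrow> occ (fst j) \<le> 1 \<and> occ (snd j) \<le> 1 \<and>
     (occ (snd j) > 0 \<longrightarrow> occ (fst j) > 0)"

definition up :: "nat \<Rightarrow> nat \<Rightarrow> just set" where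
  "up a b = {j. monolinear j \<and> (\<exists>v. eval (fst j) v = a \<and> eval (snd j) v = b)}"

definition up2 :: "nat \<Rightarrow> nat \<Rightarrow> nat \<Rightarrow> nat \<Rightarrow> just set" where
  "up2 a b c d = up a b \<inter> up c d"

definition trivial_just :: "just \<Rightarrow> bool" where
  "trivial_just j \<longleftrightarrow> monolinear j \<and> (\<forall>a' b' c' d'. j \<in> up2 a' b' c' d')"

definition nontriv :: "just set \<Rightarrow> just set" where
  "nontriv S = {j \<in> S. \<not> trivial_just j}"

definition dir_prop_m :: "nat \<Rightarrow> nat \<Rightarrow> nat \<Rightarrow> nat \<Rightarrow> bool" where
  "dir_prop_m a b c d \<longleftrightarrow>
     (\<forall>j \<in> up a b \<union> up c d. trivial_just j) \<or>
     (nontriv (up2 a b c d) \<noteq> {} \<and>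
      (\<forall>d'. nontriv (up2 a b c d) \<subseteq> nontriv (up2 a b c d') \<longrightarrow>
            nontriv (up2 a b c d') \<noteq> {} \<and> nontriv (up2 a b c d') \<subseteq> nontriv (up2 a b c d)))"

definition analogy_m :: "nat \<Rightarrow> nat \<Rightarrow> nat \<Rightarrow> nat \<Rightarrow> bool" where
  "analogy_m a b c d \<longleftrightarrow> dir_prop_m a b c d \<and> dir_prop_m b a d c \<and>
     dir_prop_m c d a b \<and> dir_prop_m d c b a"

end

theory Submission
  imports Defs
begin

lemma occ0: "occ s = 0 \<Longrightarrow> eval s v = eval s w"
  by (induction s) auto

lemma occ1: "occ s = 1 \<Longrightarrow> eval s v = eval s 1 * v"
proof (induction s)
  case (M s t)
  then have "(occ s = 0 \<and> occ t = 1) \<or> (occ s = 1 \<and> occ t = 0)" by auto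
  then show ?case
  proof
    assume h: "occ s = 0 \<and> occ t = 1"
    then show ?thesis using M occ0[of s v 1] by simp
  next
    assume h: "occ s = 1 \<and> occ t = 0"
    then show ?thesis using M occ0[of t v 1] by simp
  qed
qed auto

lemma CC_nontriv: "\<not> trivial_just (C a, C b)"
  unfolding trivial_just_def up2_def up_def by auto

lemma XX_nontriv: "\<not> trivial_just (X, X)"
proof
  assume "trivial_just (X, X)"
  then have "(X, X) \<in> up2 0 1 0 1" unfolding trivial_just_def by blast
  then show False unfolding up2_def up_def by auto
qed

lemma CC_up: "(C a, C b) \<in> up a b"
  unfolding up_def monolinear_def by auto

lemma XX_up: "(X, X) \<in> up a a"
  unfolding up_def monolinear_def by auto

lemma dir_nonempty:
  assumes "dir_prop_m a b c d" shows "up2 a b c d \<noteq> {}"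
proof -
  have "\<not> (\<forall>j \<in> up a b \<union> up c d. trivial_just j)" using CC_up CC_nontriv by blast
  then show ?thesis using assms unfolding dir_prop_m_def nontriv_def by auto
qed

lemma L:
  assumes "prime a" "prime b" "prime c" "prime d" "up2 a b c d \<noteq> {}"
  shows "b = d \<or> (a = b \<and> c = d)"
proof -
  obtain s t where st: "(s,t) \<in> up a b" "(s,t) \<in> up c d" using assms(5) unfolding up2_def by auto
  from st obtain v1 v2 where v: "eval s v1 = a" "eval t v1 = b" "eval s v2 = c" "eval t v2 = d"
    and ml: "monolinear (s,t)" unfolding up_def by auto
  show ?thesis
  proof (cases "occ t = 0")
    case True
    then show ?thesis using v occ0[of t v1 v2] by simp
  next
    case False
    then have "occ t = 1" "occ s = 1" using ml unfolding monolinear_def by auto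
    then have es: "\<And>v. eval s v = eval s 1 * v" and et: "\<And>v. eval t v = eval t 1 * v"
      using occ1 by blast+
    define k where "k = eval s 1"
    define l where "l = eval t 1"
    have e: "k * v1 = a" "l * v1 = b" "k * v2 = c" "l * v2 = d"
      using v es[of v1] es[of v2] et[of v1] et[of v2] k_def l_def by auto
    have a1: "a \<noteq> 1" "b \<noteq> 1" "c \<noteq> 1" "d \<noteq> 1" using assms by auto
    have "k = 1 \<or> v1 = 1" using prime_product e(1) assms(1) by metis
    then show ?thesis
    proof
      assume k: "k = 1"
      then have "l = 1 \<or> v1 = 1" using prime_product e(2) assms(2) by metis
      then show ?thesis using e k a1 by auto
    next
      assume v1: "v1 = 1"
      then have "k = 1 \<or> v2 = 1" using prime_product e(3) assms(3) by metis
      then show ?thesis using e v1 a1 by auto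
    qed
  qed
qed

theorem mainTheorem10:
  fixes p q p' q' :: nat
  assumes "prime p" "prime q" "prime p'" "prime q'"
  shows "analogy_m p q p' q' \<longleftrightarrow> (p = q \<and> p' = q') \<or> (p = p' \<and> q = q')"
proof
  assume "analogy_m p q p' q'"
  then have "dir_prop_m p q p' q'" "dir_prop_m q p q' p'" unfolding analogy_m_def by auto
  then have "q = q' \<or> (p = q \<and> p' = q')" "p = p' \<or> (q = p \<and> q' = p')"
    using L dir_nonempty assms by blast+
  then show "(p = q \<and> p' = q') \<or> (p = p' \<and> q = q')" by auto
next
  have A: "dir_prop_m a a c c" for a c :: nat
  proof -
    have X: "(X,X) \<in> nontriv (up2 a a c c)"
      unfolding nontriv_def up2_def using XX_up XX_nontriv by auto
    have "d' = c" if "nontriv (up2 a a c c) \<subseteq> nontriv (up2 a a c d')" for d'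
    proof -
      have "(X,X) \<in> up c d'" using X that unfolding nontriv_def up2_def by auto
      then show ?thesis unfolding up_def by auto
    qed
    then show ?thesis unfolding dir_prop_m_def using X by auto
  qed
  have B: "dir_prop_m a b a b" for a b :: nat
  proof -
    have X: "(C a, C b) \<in> nontriv (up2 a b a b)"
      unfolding nontriv_def up2_def using CC_up CC_nontriv by auto
    have "d' = b" if "nontriv (up2 a b a b) \<subseteq> nontriv (up2 a b a d')" for d'
    proof -
      have "(C a, C b) \<in> up a d'" using X that unfolding nontriv_def up2_def by auto
      then show ?thesis unfolding up_def by auto
    qed
    then show ?thesis unfolding dir_prop_m_def using X by auto
  qed
  assume "(p = q \<and> p' = q') \<or> (p = p' \<and> q = q')"
  then show "analogy_m p q p' q'" unfolding analogy_m_def using A B by auto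
qed

end
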